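(* Let $n$ be a positive integer and let $G$ be a pure $(2n)$-sparse gapset of genus $g=3n+1$ with depth $q$. Then $q\le 4$.
   Context: A gapset is a finite set $G\subset\mathbb{N}=\{1,2,\dots\}$ such that whenever $z\in G$ and $z=x+y$ with $x,y\in\mathbb{N}$, then $x\in G$ or $y\in G$; its genus is $g=\#G$. Writing $G=\{\ell_1<\dots<\ell_g\}$: multiplicity $m(G)=\min\{s\in\mathbb{N}:s\notin G\}$; conductor $c(G)=\min\{s\in\mathbb{N}: s+t\notin G\ \forall t\in\mathbb{N}_0\}$; depth $q(G)=\lceil c(G)/m(G)\rceil$. $G$ is pure $\kappa$-sparse if $\ell_{i+1}-\ell_i\le\kappa$ for all $i$ with equality for some $i$. *)

theory Defs
  imports Complex_Main
begin

definition gapset :: "nat set \<Rightarrow> bool" where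
  "gapset G \<longleftrightarrow> finite G \<and> 0 \<notin> G \<and>
     (\<forall>z\<in>G. \<forall>x y. x \<ge> 1 \<and> y \<ge> 1 \<and> z = x + y \<longrightarrow> x \<in> G \<or> y \<in> G)"

definition genus :: "nat set \<Rightarrow> nat" where
  "genus G = card G"

definition multiplicity :: "nat set \<Rightarrow> nat" where
  "multiplicity G = (LEAST s. s \<ge> 1 \<and> s \<notin> G)"

definition conductor :: "nat set \<Rightarrow> nat" where
  "conductor G = (LEAST s. s \<ge> 1 \<and> (\<forall>t. s + t \<notin> G))"

definition depth :: "nat set \<Rightarrow> int" where
  "depth G = \<lceil>real (conductor G) / real (multiplicity G)\<rceil>"

definition pure_sparse :: "nat \<Rightarrow> nat set \<Rightarrow> bool" where
  "pure_sparse \<kappa> G \<longleftrightarrow>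
     (let l = sorted_list_of_set G in
       (\<forall>i. i + 1 < length l \<longrightarrow> l ! (i+1) - l ! i \<le> \<kappa>) \<and>
       (\<exists>i. i + 1 < length l \<and> l ! (i+1) - l ! i = \<kappa>))"

end

theory Submission
  imports Defs
begin

lemma nongap_add:
  assumes "gapset G" "x \<ge> 1" "y \<ge> 1" "x \<notin> G" "y \<notin> G"
  shows "x + y \<notin> G"
  using assms unfolding gapset_def by blast

lemma gap_bound:
  assumes "gapset G" "z \<in> G"
  shows "z + 1 \<le> 2 * card G"
proof -
  have fin: "finite G" using assms unfolding gapset_def by blast
  have z0: "z \<ge> 1" using assms unfolding gapset_def by (cases z) auto
  define A where "A = G \<inter> {1..<z}"
  have "{1..<z} \<subseteq> A \<union> (\<lambda>x. z - x) ` A"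
  proof
    fix x assume x: "x \<in> {1..<z}"
    have "x \<in> G \<or> z - x \<in> G"
      using assms x unfolding gapset_def
      by (metis (no_types, lifting) atLeastLessThan_iff le_add_diff_inverse less_imp_le_nat zero_less_diff Suc_leI One_nat_def)
    then show "x \<in> A \<union> (\<lambda>x. z - x) ` A"
    proof
      assume "x \<in> G" then show ?thesis using x A_def by auto
    next
      assume h: "z - x \<in> G"
      have "z - x \<in> A" using h x A_def by auto
      moreover have "x = z - (z - x)" using x by auto
      ultimately show ?thesis by blast
    qed
  qed
  hence "card {1..<z} \<le> card (A \<union> (\<lambda>x. z - x) ` A)"
    by (intro card_mono) (auto simp: A_def)
  also have "\<dots> \<le> card A + card ((\<lambda>x. z - x) ` A)" by (rule card_Un_le)
  also have "\<dots> \<le> 2 * card A" using card_image_le[of A "\<lambda>x. z - x"] A_def by auto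
  finally have c1: "z - 1 \<le> 2 * card A" by simp
  have "A \<subseteq> G - {z}" unfolding A_def by auto
  hence "card A \<le> card (G - {z})" using fin by (intro card_mono) auto
  also have "\<dots> = card G - 1" using fin assms by simp
  finally have "card A \<le> card G - 1" .
  moreover have "card G \<ge> 1" using fin assms by (metis card_0_eq empty_iff less_one not_le)
  ultimately show ?thesis using c1 z0 by linarith
qed

theorem mainTheorem15:
  fixes n :: nat and G :: "nat set"
  assumes "n \<ge> 1"
    and "gapset G"
    and "pure_sparse (2 * n) G"
    and "genus G = 3 * n + 1"
  shows "depth G \<le> 4"
proof -
  have fin: "finite G" using assms(2) unfolding gapset_def by blast
  have "\<exists>s. s \<notin> insert 0 G" using fin by (intro ex_new_if_finite) auto
  then have ex: "\<exists>s. s \<ge> 1 \<and> s \<notin> G" by (metis insertCI less_one not_le)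
  define m where "m = multiplicity G"
  have m: "m \<ge> 1" "m \<notin> G" using LeastI_ex[OF ex] unfolding m_def multiplicity_def by auto
  define l where "l = sorted_list_of_set G"
  obtain i where i: "i + 1 < length l" "l ! (i+1) - l ! i = 2 * n"
    using assms(3) unfolding pure_sparse_def l_def Let_def by blast
  have ss: "sorted_wrt (<) l" unfolding l_def by simp
  have srt: "sorted l" unfolding l_def by simp
  have setl: "set l = G" unfolding l_def using fin by simp
  define a where "a = l ! i"
  have lt: "l ! i < l ! (i+1)" using ss i(1) by (simp add: sorted_wrt_iff_nth_less)
  have b: "l ! (i+1) = a + 2 * n" using i(2) lt a_def by simp
  have bG: "a + 2 * n \<in> G" using b i(1) setl nth_mem by metis
  have between: "x \<notin> G" if "a < x" "x < a + 2 * n" for x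
  proof
    assume "x \<in> G"
    then obtain j where j: "j < length l" "l ! j = x" using setl by (metis in_set_conv_nth)
    show False
    proof (cases "j \<le> i")
      case True
      then have "l ! j \<le> l ! i" using srt i(1) by (simp add: sorted_nth_mono)
      then show False using j that a_def by simp
    next
      case False
      then have "l ! (i+1) \<le> l ! j" using srt j(1) by (intro sorted_nth_mono) auto
      then show False using j that b by simp
    qed
  qed
  have m2n: "m \<ge> 2 * n"
  proof (rule ccontr)
    assume "\<not> m \<ge> 2 * n"
    hence mlt: "m < 2 * n" by simp
    have "\<forall>x. a < x \<longrightarrow> x \<notin> G"
    proof
      fix x show "a < x \<longrightarrow> x \<notin> G"
      proof (induction x rule: less_induct)
        case (less x)
        show ?case
        proof
          assume ax: "a < x"
          show "x \<notin> G"
          proof (cases "x < a + 2 * n")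
            case True then show ?thesis using between ax by blast
          next
            case False
            then have "a < x - m" "x - m < x" using mlt m(1) by auto
            then have "x - m \<notin> G" using less by blast
            moreover have "x = (x - m) + m" using False mlt by simp
            ultimately show ?thesis using nongap_add[OF assms(2) _ m(1) _ m(2)] \<open>a < x - m\<close>
              by (metis less_imp_le_nat le_trans le_add1 Suc_le_eq plus_1_eq_Suc)
          qed
        qed
      qed
    qed
    then show False using bG assms(1) by auto
  qed
  have cond: "conductor G \<le> 4 * m"
    unfolding conductor_def
  proof (rule Least_le, intro conjI allI)
    show "1 \<le> 4 * m" using m by simp
    fix t show "4 * m + t \<notin> G"
    proof
      assume "4 * m + t \<in> G"
      from gap_bound[OF assms(2) this] assms(4) m2n assms(1) show False
        unfolding genus_def by linarith
    qed
  qed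
  have "real (conductor G) / real m \<le> 4" using cond m(1)
    by (simp add: divide_le_eq)
  then show ?thesis unfolding depth_def m_def[symmetric] by (simp add: ceiling_le_iff)
qed

end
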